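(* Let $\mathbf{A}$ be an $n\times n$ repeated-row matrix of type $\mathbf{m}=(m_1,\dots,m_t)$ with rows $\mathbf{a}_1,\dots,\mathbf{a}_t$, and let $\mu$ be the sum-product flow on $\mathcal{T}(\mathbf{A},\mathbf{m})$. For every vertex $\boldsymbol\lambda\ne\mathbf{0}$, let $j=\lambda_1+\dots+\lambda_t$, let $\mathbf{c}_\ell=(a_{\ell1},\dots,a_{\ell j})$ for $\ell\in[t]$, and let $\mathbf{C}(\boldsymbol\lambda)$ be the $j\times j$ matrix whose rows are $\mathbf{c}_1$ repeated $\lambda_1$ times, $\mathbf{c}_2$ repeated $\lambda_2$ times, …, $\mathbf{c}_t$ repeated $\lambda_t$ times. Then $$\mathrm{per}(\mathbf{C}(\boldsymbol\lambda))=\lambda_1!\lambda_2!\cdots\lambda_t!\,\mu(\boldsymbol\lambda).$$ In particular $\mathrm{per}(\mathbf{A})=m_1!m_2!\cdots m_t!\,\mu(\mathrm{toor})$.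
   Context: $\mathrm{per}(\mathbf{B})=\sum_{\boldsymbol\sigma\in\mathbb{S}_k}\prod_i b_{i\sigma_i}$ for a $k\times k$ matrix (invariant under row permutations). An $n\times n$ matrix $\mathbf{A}$ is a repeated-row matrix of type $\mathbf{m}=(m_1,\dots,m_t)$ (positive integers with $\sum m_\ell=n$) with rows $\mathbf{a}_1,\dots,\mathbf{a}_t$, $\mathbf{a}_\ell=(a_{\ell1},\dots,a_{\ell n})$, if its rows consist of $\mathbf{a}_\ell$ repeated exactly $m_\ell$ times for each $\ell$. The trellis $\mathcal{T}(\mathbf{A},\mathbf{m})$: vertices are integer tuples $\boldsymbol\lambda=(\lambda_1,\dots,\lambda_t)$ with $0\le\lambda_\ell\le m_\ell$; layer $V_j$ consists of those with $\sum_\ell\lambda_\ell=j$ (root $\mathbf{0}$, toor $\mathbf{m}$); for $j\in[n]$, $(\boldsymbol\mu,\boldsymbol\lambda)\in V_{j-1}\times V_j$ is an edge iff there is a unique $\ell^*$ with $\lambda_{\ell^*}=\mu_{\ell^*}+1$ and $\lambda_\ell=\mu_\ell$ for $\ell\ne\ell^*$; its label is $a_{\ell^* j}$. The sum-product flow: $\mu(\mathrm{root})=1$ and $\mu(v)=\sum_{(u,v)\in E}L(u,v)\mu(u)$ layer by layer. *)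

theory Defs
  imports "HOL-Combinatorics.Permutations"
begin

(* All indices are 1-based as in the paper: rows ell in {1..t}, columns/positions in {1..n}.
   A k x k matrix is a function nat => nat => 'a, read on {1..k} x {1..k}. *)

definition per :: "(nat \<Rightarrow> nat \<Rightarrow> 'a::comm_ring_1) \<Rightarrow> nat \<Rightarrow> 'a" where
  "per B k = (\<Sum>\<sigma> | \<sigma> permutes {1..k}. \<Prod>i=1..k. B i (\<sigma> i))"

definition repeated_row ::
  "(nat \<Rightarrow> nat \<Rightarrow> 'a) \<Rightarrow> nat \<Rightarrow> (nat \<Rightarrow> nat) \<Rightarrow> nat \<Rightarrow> (nat \<Rightarrow> nat \<Rightarrow> 'a) \<Rightarrow> bool" where
  "repeated_row A n m t a \<longleftrightarrow>
     (\<forall>l\<in>{1..t}. m l > 0) \<and> (\<Sum>l=1..t. m l) = n \<and>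
     (\<exists>g. (\<forall>i\<in>{1..n}. g i \<in> {1..t} \<and> (\<forall>c\<in>{1..n}. A i c = a (g i) c)) \<and>
          (\<forall>l\<in>{1..t}. card {i\<in>{1..n}. g i = l} = m l))"

definition trellis_vertices :: "(nat \<Rightarrow> nat) \<Rightarrow> nat \<Rightarrow> (nat \<Rightarrow> nat) set" where
  "trellis_vertices m t = {lam. (\<forall>l\<in>{1..t}. lam l \<le> m l) \<and> (\<forall>l. l \<notin> {1..t} \<longrightarrow> lam l = 0)}"

definition layer :: "(nat \<Rightarrow> nat) \<Rightarrow> nat \<Rightarrow> nat \<Rightarrow> (nat \<Rightarrow> nat) set" where
  "layer m t j = {lam \<in> trellis_vertices m t. (\<Sum>l=1..t. lam l) = j}"

definition root :: "nat \<Rightarrow> nat" where "root = (\<lambda>_. 0)"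

definition toor :: "(nat \<Rightarrow> nat) \<Rightarrow> nat \<Rightarrow> nat \<Rightarrow> nat" where
  "toor m t = (\<lambda>l. if l \<in> {1..t} then m l else 0)"

definition is_edge :: "(nat \<Rightarrow> nat) \<Rightarrow> nat \<Rightarrow> nat \<Rightarrow> (nat \<Rightarrow> nat) \<Rightarrow> (nat \<Rightarrow> nat) \<Rightarrow> bool" where
  "is_edge m t j u v \<longleftrightarrow> j \<ge> 1 \<and> u \<in> layer m t (j - 1) \<and> v \<in> layer m t j \<and>
     (\<exists>!l. l \<in> {1..t} \<and> v l = u l + 1 \<and> (\<forall>l'\<in>{1..t}. l' \<noteq> l \<longrightarrow> v l' = u l'))"

definition edge_index :: "nat \<Rightarrow> (nat \<Rightarrow> nat) \<Rightarrow> (nat \<Rightarrow> nat) \<Rightarrow> nat" where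
  "edge_index t u v = (THE l. l \<in> {1..t} \<and> v l = u l + 1 \<and> (\<forall>l'\<in>{1..t}. l' \<noteq> l \<longrightarrow> v l' = u l'))"

definition edge_label :: "(nat \<Rightarrow> nat \<Rightarrow> 'a) \<Rightarrow> nat \<Rightarrow> nat \<Rightarrow> (nat \<Rightarrow> nat) \<Rightarrow> (nat \<Rightarrow> nat) \<Rightarrow> 'a" where
  "edge_label a t j u v = a (edge_index t u v) j"

fun flow_layer :: "(nat \<Rightarrow> nat \<Rightarrow> 'a::comm_ring_1) \<Rightarrow> (nat \<Rightarrow> nat) \<Rightarrow> nat \<Rightarrow> nat \<Rightarrow> (nat \<Rightarrow> nat) \<Rightarrow> 'a" where
  "flow_layer a m t 0 v = (if v = root then 1 else 0)"
| "flow_layer a m t (Suc j) v =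
     (\<Sum>u \<in> {u. is_edge m t (Suc j) u v}. edge_label a t (Suc j) u v * flow_layer a m t j u)"

definition flow :: "(nat \<Rightarrow> nat \<Rightarrow> 'a::comm_ring_1) \<Rightarrow> (nat \<Rightarrow> nat) \<Rightarrow> nat \<Rightarrow> (nat \<Rightarrow> nat) \<Rightarrow> 'a" where
  "flow a m t v = flow_layer a m t (\<Sum>l=1..t. v l) v"

definition block_of :: "(nat \<Rightarrow> nat) \<Rightarrow> nat \<Rightarrow> nat" where
  "block_of lam r = (LEAST l. r \<le> (\<Sum>i=1..l. lam i))"

definition Cmat :: "(nat \<Rightarrow> nat \<Rightarrow> 'a) \<Rightarrow> (nat \<Rightarrow> nat) \<Rightarrow> nat \<Rightarrow> nat \<Rightarrow> 'a" where
  "Cmat a lam r c = a (block_of lam r) c"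

end

theory Submission
  imports Defs
begin


definition F :: "(nat \<Rightarrow> nat \<Rightarrow> 'a::comm_ring_1) \<Rightarrow> (nat \<Rightarrow> nat) \<Rightarrow> nat \<Rightarrow> 'a" where
  "F a g j = (\<Sum>\<tau> | \<tau> permutes {1..j}. \<Prod>c=1..j. a (g (\<tau> c)) c)"

definition cnt :: "(nat \<Rightarrow> nat) \<Rightarrow> nat \<Rightarrow> nat \<Rightarrow> nat" where
  "cnt g j l = card {i\<in>{1..j}. g i = l}"

lemma F_Suc:
  "F a g (Suc j) = (\<Sum>b\<in>{1..Suc j}. a (g b) (Suc j) * F a (g \<circ> transpose (Suc j) b) j)"
proof -
  have ins: "{1..Suc j} = insert (Suc j) {1..j}" by auto
  have "F a g (Suc j) = (\<Sum>b\<in>insert (Suc j) {1..j}. \<Sum>q | q permutes {1..j}.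
          \<Prod>c=1..Suc j. a (g ((transpose (Suc j) b \<circ> q) c)) c)"
    unfolding F_def ins by (rule sum_over_permutations_insert) auto
  also have "\<dots> = (\<Sum>b\<in>{1..Suc j}. \<Sum>q | q permutes {1..j}.
          a (g b) (Suc j) * (\<Prod>c=1..j. a ((g \<circ> transpose (Suc j) b) (q c)) c))"
  proof (rule sum.cong[OF ins[symmetric]], rule sum.cong[OF refl])
    fix b q assume "q \<in> {q. q permutes {1..j}}"
    then have q: "q permutes {1..j}" by simp
    have "q (Suc j) = Suc j" using q by (simp add: permutes_def)
    then show "(\<Prod>c=1..Suc j. a (g ((transpose (Suc j) b \<circ> q) c)) c) =
          a (g b) (Suc j) * (\<Prod>c=1..j. a ((g \<circ> transpose (Suc j) b) (q c)) c)"
      by (simp add: prod.cl_ivl_Suc mult.commute)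
  qed
  also have "\<dots> = (\<Sum>b\<in>{1..Suc j}. a (g b) (Suc j) * F a (g \<circ> transpose (Suc j) b) j)"
    unfolding F_def by (simp add: sum_distrib_left)
  finally show ?thesis .
qed

lemma cnt_swap:
  assumes b: "b \<in> {1..Suc j}"
  shows "cnt (g \<circ> transpose (Suc j) b) j l = cnt g (Suc j) l - (if g b = l then 1 else 0)"
proof -
  let ?t = "transpose (Suc j) b"
  have tp: "?t permutes {1..Suc j}" using b by (auto intro: permutes_swap_id)
  have inj: "inj ?t" by simp
  have im: "?t ` {1..j} = {1..Suc j} - {b}"
  proof -
    have "{1..j} = {1..Suc j} - {Suc j}" by auto
    then have "?t ` {1..j} = ?t ` {1..Suc j} - {?t (Suc j)}"
      using image_set_diff[OF inj] by simp
    then show ?thesis using permutes_image[OF tp] by simp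
  qed
  have "?t ` {i\<in>{1..j}. g (?t i) = l} = {k\<in>{1..Suc j} - {b}. g k = l}"
  proof -
    have "?t ` {i\<in>{1..j}. g (?t i) = l} = {k\<in>?t ` {1..j}. g k = l}" by blast
    then show ?thesis by (simp only: im)
  qed
  moreover have "card (?t ` {i\<in>{1..j}. g (?t i) = l}) = card {i\<in>{1..j}. g (?t i) = l}"
    by (rule card_image) (rule inj_on_subset[OF inj], simp)
  ultimately have "cnt (g \<circ> ?t) j l = card {k\<in>{1..Suc j} - {b}. g k = l}"
    unfolding cnt_def by simp
  also have "{k\<in>{1..Suc j} - {b}. g k = l} = {k\<in>{1..Suc j}. g k = l} - {b}" by auto
  also have "card \<dots> = cnt g (Suc j) l - (if g b = l then 1 else 0)"
    unfolding cnt_def using b by (simp add: card_Diff_singleton_if)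
  finally show ?thesis .
qed

lemma sum_cnt:
  assumes "\<forall>i\<in>{1..j}. g i \<in> {1..t}"
  shows "(\<Sum>l=1..t. cnt g j l) = j"
proof -
  have "(\<Sum>l=1..t. cnt g j l) = (\<Sum>l=1..t. \<Sum>i\<in>{i\<in>{1..j}. g i = l}. 1)"
    unfolding cnt_def by simp
  also have "\<dots> = (\<Sum>i\<in>{1..j}. (1::nat))"
    by (rule sum.group) (use assms in auto)
  finally show ?thesis by simp
qed

lemma sum_group_of_nat:
  fixes h :: "nat \<Rightarrow> 'a::comm_ring_1"
  assumes "\<forall>i\<in>{1..j}. g i \<in> {1..t}"
  shows "(\<Sum>r\<in>{1..j}. h (g r)) = (\<Sum>l=1..t. of_nat (cnt g j l) * h l)"
proof -
  have "(\<Sum>r\<in>{1..j}. h (g r)) = (\<Sum>l=1..t. \<Sum>r\<in>{i\<in>{1..j}. g i = l}. h (g r))"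
    by (rule sum.group[symmetric]) (use assms in auto)
  also have "\<dots> = (\<Sum>l=1..t. of_nat (cnt g j l) * h l)"
    unfolding cnt_def by (rule sum.cong) auto
  finally show ?thesis .
qed



lemma flow_Suc:
  assumes v: "v \<in> layer m t (Suc j)"
  shows "flow_layer a m t (Suc j) v =
    (\<Sum>l\<in>{l\<in>{1..t}. 0 < v l}. a l (Suc j) * flow_layer a m t j (v(l := v l - 1)))"
proof -
  define S where "S = {l\<in>{1..t}. 0 < v l}"
  define h where "h l = v(l := v l - 1)" for l
  have vt: "\<forall>l\<in>{1..t}. v l \<le> m l" "\<forall>l. l \<notin> {1..t} \<longrightarrow> v l = 0" and vs: "(\<Sum>l=1..t. v l) = Suc j"
    using v unfolding layer_def trellis_vertices_def by auto
  have hl: "h l \<in> layer m t j" if l: "l \<in> S" for l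
  proof -
    have lt: "l \<in> {1..t}" "0 < v l" using l S_def by auto
    have "(\<Sum>k=1..t. v k) = v l + (\<Sum>k\<in>{1..t}-{l}. v k)"
      using lt by (simp add: sum.remove)
    moreover have "(\<Sum>k=1..t. h l k) = h l l + (\<Sum>k\<in>{1..t}-{l}. h l k)"
      using lt by (simp add: sum.remove)
    moreover have "(\<Sum>k\<in>{1..t}-{l}. h l k) = (\<Sum>k\<in>{1..t}-{l}. v k)"
      by (rule sum.cong) (auto simp: h_def)
    ultimately have "(\<Sum>k=1..t. h l k) = j" using vs lt by (simp add: h_def)
    moreover have "\<forall>k\<in>{1..t}. h l k \<le> m k"
    proof
      fix k assume k: "k \<in> {1..t}"
      have "h l k \<le> v k" unfolding h_def by simp
      then show "h l k \<le> m k" using vt(1) k by (meson le_trans)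
    qed
    moreover have "\<forall>k. k \<notin> {1..t} \<longrightarrow> h l k = 0" using vt(2) lt unfolding h_def by auto
    ultimately show ?thesis unfolding layer_def trellis_vertices_def by blast
  qed
  have uniq: "(l' \<in> {1..t} \<and> v l' = h l l' + 1 \<and> (\<forall>l''\<in>{1..t}. l'' \<noteq> l' \<longrightarrow> v l'' = h l l''))
      \<longleftrightarrow> l' = l" if l: "l \<in> S" for l l'
    using l unfolding S_def h_def by auto
  have edge: "is_edge m t (Suc j) (h l) v" if "l \<in> S" for l
    unfolding is_edge_def using hl[OF that] v uniq[OF that] by auto
  have idx: "edge_index t (h l) v = l" if "l \<in> S" for l
    unfolding edge_index_def using uniq[OF that] by simp
  have E: "{u. is_edge m t (Suc j) u v} = h ` S"
  proof
    show "h ` S \<subseteq> {u. is_edge m t (Suc j) u v}" using edge by auto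
    show "{u. is_edge m t (Suc j) u v} \<subseteq> h ` S"
    proof
      fix u assume "u \<in> {u. is_edge m t (Suc j) u v}"
      then have e: "is_edge m t (Suc j) u v" by simp
      then obtain l where l: "l \<in> {1..t}" "v l = u l + 1" "\<forall>l'\<in>{1..t}. l' \<noteq> l \<longrightarrow> v l' = u l'"
        unfolding is_edge_def by auto
      have u0: "\<forall>k. k \<notin> {1..t} \<longrightarrow> u k = 0"
        using e unfolding is_edge_def layer_def trellis_vertices_def by auto
      have lS: "l \<in> S" using l unfolding S_def by auto
      have "u = h l"
      proof
        fix k show "u k = h l k"
          using l u0 vt(2) unfolding h_def by (cases "k \<in> {1..t}") auto
      qed
      then show "u \<in> h ` S" using lS by auto
    qed
  qed
  have inj: "inj_on h S"
  proof
    fix x y assume "x \<in> S" "y \<in> S" "h x = h y"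
    then have "h x x = h y x" by simp
    then show "x = y" using \<open>x \<in> S\<close> unfolding h_def S_def by (auto split: if_splits)
  qed
  have "flow_layer a m t (Suc j) v = (\<Sum>u\<in>h ` S. edge_label a t (Suc j) u v * flow_layer a m t j u)"
    by (simp add: E)
  also have "\<dots> = (\<Sum>l\<in>S. edge_label a t (Suc j) (h l) v * flow_layer a m t j (h l))"
    by (rule sum.reindex[OF inj, unfolded comp_def])
  also have "\<dots> = (\<Sum>l\<in>S. a l (Suc j) * flow_layer a m t j (h l))"
    by (rule sum.cong) (auto simp: edge_label_def idx)
  finally show ?thesis unfolding S_def h_def .
qed

lemma fact_prod_step:
  fixes l t :: nat and lam :: "nat \<Rightarrow> nat"
  assumes l: "l \<in> {1..t}" and pos: "0 < lam l"
  shows "lam l * (\<Prod>k=1..t. fact ((lam(l := lam l - 1)) k)) = (\<Prod>k=1..t. fact (lam k) :: nat)"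
proof -
  have a0: "(\<Prod>k=1..t. fact ((lam(l := lam l - 1)) k)) = fact ((lam(l := lam l - 1)) l) * (\<Prod>k\<in>{1..t}-{l}. fact ((lam(l := lam l - 1)) k))"
    using l by (intro prod.remove) auto
  have a: "(\<Prod>k=1..t. fact ((lam(l := lam l - 1)) k)) = fact (lam l - 1) * (\<Prod>k\<in>{1..t}-{l}. fact ((lam(l := lam l - 1)) k))"
    unfolding a0 by simp
  have b: "(\<Prod>k=1..t. fact (lam k)) = fact (lam l) * (\<Prod>k\<in>{1..t}-{l}. fact (lam k) :: nat)"
    using l by (simp add: prod.remove)
  have c: "(\<Prod>k\<in>{1..t}-{l}. fact ((lam(l := lam l - 1)) k)) = (\<Prod>k\<in>{1..t}-{l}. fact (lam k) :: nat)"
    by (rule prod.cong) auto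
  have d: "lam l * fact (lam l - 1) = (fact (lam l) :: nat)"
  proof -
    obtain q where q: "lam l = Suc q" using pos by (cases "lam l") auto
    show ?thesis unfolding q by (simp only: fact_Suc diff_Suc_1 of_nat_id)
  qed
  define P where "P = (\<Prod>k\<in>{1..t}-{l}. fact (lam k) :: nat)"
  have "lam l * (fact (lam l - 1) * P) = (lam l * fact (lam l - 1)) * P"
    by (rule mult.assoc[symmetric])
  also have "\<dots> = fact (lam l) * P" by (simp only: d)
  finally show ?thesis unfolding a b c P_def .
qed

lemma helper:
  fixes x a p f q :: "'a::comm_ring_1"
  assumes "x * p = q" shows "x * (a * (p * f)) = q * (a * f)"
proof -
  have "x * (a * (p * f)) = (x * p) * (a * f)" by (simp only: ac_simps)
  then show ?thesis by (simp only: assms)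
qed

lemma F_zero: "F a g 0 = 1"
  unfolding F_def by (simp add: permutes_empty)

lemma main:
  "\<forall>g lam. (\<forall>i\<in>{1..j}. g i \<in> {1..t}) \<longrightarrow> lam \<in> trellis_vertices m t \<longrightarrow>
     (\<forall>l\<in>{1..t}. cnt g j l = lam l) \<longrightarrow>
     F a g j = of_nat (\<Prod>l=1..t. fact (lam l)) * flow_layer a m t j lam"
proof (induction j)
  case 0
  show ?case
  proof (intro allI impI)
    fix g lam assume "lam \<in> trellis_vertices m t" "\<forall>l\<in>{1..t}. cnt g 0 l = lam l"
    then have "lam = root"
      unfolding trellis_vertices_def root_def cnt_def by (auto intro!: ext)
    then show "F a g 0 = of_nat (\<Prod>l=1..t. fact (lam l)) * flow_layer a m t 0 lam"
      by (simp add: F_zero root_def)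
  qed
next
  case (Suc j)
  show ?case
  proof (intro allI impI)
    fix g lam assume g: "\<forall>i\<in>{1..Suc j}. g i \<in> {1..t}" and lam: "lam \<in> trellis_vertices m t"
      and c: "\<forall>l\<in>{1..t}. cnt g (Suc j) l = lam l"
    define H where "H l = a l (Suc j) * (of_nat (\<Prod>k=1..t. fact ((lam(l := lam l - 1)) k)) *
       flow_layer a m t j (lam(l := lam l - 1)))" for l
    have lay: "lam \<in> layer m t (Suc j)"
      using sum_cnt[OF g] c lam unfolding layer_def by simp
    have Fb: "F a (g \<circ> transpose (Suc j) b) j = of_nat (\<Prod>k=1..t. fact ((lam(g b := lam (g b) - 1)) k)) *
       flow_layer a m t j (lam(g b := lam (g b) - 1))" if b: "b \<in> {1..Suc j}" for b
    proof -
      have "transpose (Suc j) b permutes {1..Suc j}" using b by (auto intro: permutes_swap_id)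
      then have h1: "\<forall>i\<in>{1..j}. (g \<circ> transpose (Suc j) b) i \<in> {1..t}"
      proof (intro ballI)
        fix i assume i: "i \<in> {1..j}"
        assume tp: "transpose (Suc j) b permutes {1..Suc j}"
        have "transpose (Suc j) b i \<in> {1..Suc j}"
          using permutes_in_image[OF tp, of i] i by simp
        then show "(g \<circ> transpose (Suc j) b) i \<in> {1..t}" using g by simp
      qed
      have h2: "lam(g b := lam (g b) - 1) \<in> trellis_vertices m t"
      proof -
        have "\<forall>k\<in>{1..t}. (lam(g b := lam (g b) - 1)) k \<le> m k"
        proof
          fix k assume k: "k \<in> {1..t}"
          have "(lam(g b := lam (g b) - 1)) k \<le> lam k" by simp
          then show "(lam(g b := lam (g b) - 1)) k \<le> m k"
            using lam k unfolding trellis_vertices_def by (blast intro: le_trans)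
        qed
        moreover have "\<forall>k. k \<notin> {1..t} \<longrightarrow> (lam(g b := lam (g b) - 1)) k = 0"
          using lam unfolding trellis_vertices_def by simp
        ultimately show ?thesis unfolding trellis_vertices_def by blast
      qed
      have h3: "\<forall>l\<in>{1..t}. cnt (g \<circ> transpose (Suc j) b) j l = (lam(g b := lam (g b) - 1)) l"
        using cnt_swap[OF b] c by auto
      show ?thesis using Suc.IH[rule_format, OF h1[rule_format] h2 h3[rule_format]] .
    qed
    have "F a g (Suc j) = (\<Sum>b\<in>{1..Suc j}. H (g b))"
      unfolding F_Suc H_def by (rule sum.cong) (auto simp: Fb)
    also have "\<dots> = (\<Sum>l=1..t. of_nat (lam l) * H l)"
      using sum_group_of_nat[OF g, of H] c by simp
    also have "\<dots> = (\<Sum>l\<in>{l\<in>{1..t}. 0 < lam l}. of_nat (lam l) * H l)"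
      by (rule sum.mono_neutral_right) (simp, blast, simp)
    also have "\<dots> = (\<Sum>l\<in>{l\<in>{1..t}. 0 < lam l}. of_nat (\<Prod>l=1..t. fact (lam l)) *
        (a l (Suc j) * flow_layer a m t j (lam(l := lam l - 1))))"
    proof (rule sum.cong[OF refl])
      fix l assume "l \<in> {l\<in>{1..t}. 0 < lam l}"
      then have "lam l * (\<Prod>k=1..t. fact ((lam(l := lam l - 1)) k)) = (\<Prod>l=1..t. fact (lam l))"
        by (intro fact_prod_step) auto
      then have "of_nat (lam l) * of_nat (\<Prod>k=1..t. fact ((lam(l := lam l - 1)) k)) =
          (of_nat (\<Prod>l=1..t. fact (lam l)) :: 'a)"
        by (simp only: of_nat_mult[symmetric])
      then show "of_nat (lam l) * H l = of_nat (\<Prod>l=1..t. fact (lam l)) *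
        (a l (Suc j) * flow_layer a m t j (lam(l := lam l - 1)))"
        unfolding H_def by (rule helper)
    qed
    also have "\<dots> = of_nat (\<Prod>l=1..t. fact (lam l)) * flow_layer a m t (Suc j) lam"
      by (subst flow_Suc[OF lay]) (simp only: sum_distrib_left)
    finally show "F a g (Suc j) = of_nat (\<Prod>l=1..t. fact (lam l)) * flow_layer a m t (Suc j) lam" .
  qed
qed

lemma per_F:
  assumes "\<forall>i\<in>{1..j}. \<forall>c\<in>{1..j}. B i c = a (g i) c"
  shows "per B j = F a g j"
proof -
  have "per B j = (\<Sum>\<sigma> | \<sigma> permutes {1..j}. \<Prod>c=1..j. a (g (inv \<sigma> c)) c)"
    unfolding per_def
  proof (rule sum.cong[OF refl])
    fix \<sigma> assume "\<sigma> \<in> {\<sigma>. \<sigma> permutes {1..j}}"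
    then have s: "\<sigma> permutes {1..j}" by simp
    have "(\<Prod>i=1..j. B i (\<sigma> i)) = (\<Prod>i=1..j. a (g (inv \<sigma> (\<sigma> i))) (\<sigma> i))"
      by (rule prod.cong) (use assms s permutes_in_image[OF s] permutes_inverses(2)[OF s] in auto)
    also have "\<dots> = (\<Prod>c=1..j. a (g (inv \<sigma> c)) c)"
      by (rule prod.reindex_bij_betw[OF permutes_imp_bij[OF s], where g="\<lambda>c. a (g (inv \<sigma> c)) c"])
    finally show "(\<Prod>i=1..j. B i (\<sigma> i)) = (\<Prod>c=1..j. a (g (inv \<sigma> c)) c)" .
  qed
  also have "\<dots> = F a g j"
    unfolding F_def by (rule sum_permutations_inverse[symmetric])
  finally show ?thesis .
qed



lemma S_mono: "k \<le> k' \<Longrightarrow> sum (lam::nat\<Rightarrow>nat) {1..k} \<le> sum lam {1..k'}"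
  by (rule sum_mono2) auto

lemma block_range:
  fixes lam :: "nat \<Rightarrow> nat"
  assumes "1 \<le> r" "r \<le> sum lam {1..t}"
  shows "block_of lam r \<in> {1..t}"
proof -
  have a: "r \<le> sum lam {1..block_of lam r}"
    unfolding block_of_def by (rule LeastI[of _ t]) (rule assms(2))
  have b: "block_of lam r \<le> t"
    unfolding block_of_def by (rule Least_le) (rule assms(2))
  have "block_of lam r \<noteq> 0"
  proof
    assume "block_of lam r = 0"
    then show False using a assms(1) by simp
  qed
  then show ?thesis using b by simp
qed

lemma block_char:
  fixes lam :: "nat \<Rightarrow> nat"
  assumes "r \<le> sum lam {1..t}" "1 \<le> l"
  shows "block_of lam r = l \<longleftrightarrow> sum lam {1..l-1} < r \<and> r \<le> sum lam {1..l}"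
proof
  assume bl: "block_of lam r = l"
  have "r \<le> sum lam {1..block_of lam r}"
    unfolding block_of_def by (rule LeastI[of _ t]) (rule assms(1))
  moreover have "sum lam {1..l-1} < r"
  proof (rule ccontr)
    assume "\<not> sum lam {1..l-1} < r"
    then have "r \<le> sum lam {1..l-1}" by simp
    then have "block_of lam r \<le> l - 1" unfolding block_of_def by (rule Least_le)
    then show False using bl assms(2) by simp
  qed
  ultimately show "sum lam {1..l-1} < r \<and> r \<le> sum lam {1..l}" using bl by simp
next
  assume h: "sum lam {1..l-1} < r \<and> r \<le> sum lam {1..l}"
  show "block_of lam r = l"
    unfolding block_of_def
  proof (rule Least_equality)
    show "r \<le> sum lam {1..l}" using h by simp
    fix y assume y: "r \<le> sum lam {1..y}"
    show "l \<le> y"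
    proof (rule ccontr)
      assume "\<not> l \<le> y"
      then have "y \<le> l - 1" by simp
      then have "sum lam {1..y} \<le> sum lam {1..l-1}" by (rule S_mono)
      then show False using h y by simp
    qed
  qed
qed

lemma block_cnt:
  fixes lam :: "nat \<Rightarrow> nat"
  assumes l: "l \<in> {1..t}"
  shows "cnt (block_of lam) (sum lam {1..t}) l = lam l"
proof -
  obtain k where k: "l = Suc k" using l by (cases l) auto
  have Sl: "sum lam {1..l} = sum lam {1..l-1} + lam l"
    unfolding k by (simp add: sum.cl_ivl_Suc)
  have St: "sum lam {1..l} \<le> sum lam {1..t}" using l by (intro S_mono) simp
  have "{i\<in>{1..sum lam {1..t}}. block_of lam i = l} = {sum lam {1..l-1}<..sum lam {1..l}}"
  proof (rule set_eqI)
    fix i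
    show "i \<in> {i\<in>{1..sum lam {1..t}}. block_of lam i = l} \<longleftrightarrow> i \<in> {sum lam {1..l-1}<..sum lam {1..l}}"
    proof
      assume "i \<in> {i\<in>{1..sum lam {1..t}}. block_of lam i = l}"
      then show "i \<in> {sum lam {1..l-1}<..sum lam {1..l}}"
        using block_char[of i lam t l] l by auto
    next
      assume i: "i \<in> {sum lam {1..l-1}<..sum lam {1..l}}"
      then have "1 \<le> i" "i \<le> sum lam {1..t}" using St by auto
      then show "i \<in> {i\<in>{1..sum lam {1..t}}. block_of lam i = l}"
        using block_char[of i lam t l] l i by auto
    qed
  qed
  then show ?thesis unfolding cnt_def using Sl by simp
qed

theorem theorem5:
  fixes A a :: "nat \<Rightarrow> nat \<Rightarrow> 'a::comm_ring_1"
    and m :: "nat \<Rightarrow> nat" and n t :: nat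
  assumes "repeated_row A n m t a"
  shows "(\<forall>lam \<in> trellis_vertices m t. lam \<noteq> root \<longrightarrow>
            per (Cmat a lam) (\<Sum>l=1..t. lam l)
              = of_nat (\<Prod>l=1..t. fact (lam l)) * flow a m t lam)
       \<and> per A n = of_nat (\<Prod>l=1..t. fact (m l)) * flow a m t (toor m t)"
proof
  show "\<forall>lam \<in> trellis_vertices m t. lam \<noteq> root \<longrightarrow>
            per (Cmat a lam) (\<Sum>l=1..t. lam l)
              = of_nat (\<Prod>l=1..t. fact (lam l)) * flow a m t lam"
  proof (intro ballI impI)
    fix lam assume lam: "lam \<in> trellis_vertices m t"
    have "per (Cmat a lam) (\<Sum>l=1..t. lam l) = F a (block_of lam) (\<Sum>l=1..t. lam l)"
      by (rule per_F) (simp add: Cmat_def)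
    also have "\<dots> = of_nat (\<Prod>l=1..t. fact (lam l)) * flow_layer a m t (\<Sum>l=1..t. lam l) lam"
    proof (rule main[rule_format])
      fix i assume "i \<in> {1..sum lam {1..t}}"
      then show "block_of lam i \<in> {1..t}" by (intro block_range) auto
    next
      show "lam \<in> trellis_vertices m t" by (rule lam)
    next
      fix l assume "l \<in> {1..t}"
      then show "cnt (block_of lam) (sum lam {1..t}) l = lam l" by (rule block_cnt)
    qed
    finally show "per (Cmat a lam) (\<Sum>l=1..t. lam l)
              = of_nat (\<Prod>l=1..t. fact (lam l)) * flow a m t lam" unfolding flow_def .
  qed
next
  from assms obtain g where g1: "\<forall>i\<in>{1..n}. g i \<in> {1..t} \<and> (\<forall>c\<in>{1..n}. A i c = a (g i) c)"
    and g2: "\<forall>l\<in>{1..t}. card {i\<in>{1..n}. g i = l} = m l" and ms: "(\<Sum>l=1..t. m l) = n"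
    unfolding repeated_row_def by blast
  have "per A n = F a g n" by (rule per_F) (use g1 in blast)
  also have "\<dots> = of_nat (\<Prod>l=1..t. fact (toor m t l)) * flow_layer a m t n (toor m t)"
  proof (rule main[rule_format])
    fix i assume "i \<in> {1..n}" then show "g i \<in> {1..t}" using g1 by blast
  next
    show "toor m t \<in> trellis_vertices m t" unfolding trellis_vertices_def toor_def by auto
  next
    fix l assume "l \<in> {1..t}" then show "cnt g n l = toor m t l"
      unfolding cnt_def toor_def using g2 by simp
  qed
  also have "(\<Prod>l=1..t. fact (toor m t l)) = (\<Prod>l=1..t. fact (m l))"
    by (rule prod.cong) (auto simp: toor_def)
  also have "flow_layer a m t n (toor m t) = flow a m t (toor m t)"
  proof -
    have "(\<Sum>l=1..t. toor m t l) = (\<Sum>l=1..t. m l)" by (rule sum.cong) (auto simp: toor_def)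
    then show ?thesis unfolding flow_def using ms by simp
  qed
  finally show "per A n = of_nat (\<Prod>l=1..t. fact (m l)) * flow a m t (toor m t)" .
qed


end
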